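(* Let $\{S_1,\dots,S_m\}$ be a system of contraction maps of $\mathbb R^n$ with $r_k=\operatorname{Lip}S_k$, $\mathbf r=(r_1,\dots,r_m)$, $\bar r=\max_k r_k$. For $t\in\mathbb R^n$ let $\mathcal S_t=\{S_1,\dots,S_{m-1},S_{m,t}\}$ with $S_{m,t}(x)=S_m(x)+t$, and let $K_t$ be its attractor. Let $1\le k<m$. If $r_k+r_m+\bar r<1$ and $s_{\mathbf r}<n/2$, then $S_k(K_t)\cap S_{m,t}(K_t)=\varnothing$ for Lebesgue almost all $t\in\mathbb R^n$.
   Context: The attractor of a system of contractions $\{T_1,\dots,T_m\}$ is the unique nonempty compact set $K$ with $K=\bigcup_k T_k(K)$. $s_{\mathbf r}$ is the unique solution $s$ of $r_1^s+\dots+r_m^s=1$. *)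

theory Defs
  imports "HOL-Analysis.Analysis"
begin

definition Lip :: "('a::metric_space \<Rightarrow> 'b::metric_space) \<Rightarrow> real" where
  "Lip f = Inf {C. C-lipschitz_on UNIV f}"

definition contraction_map :: "('a::metric_space \<Rightarrow> 'a) \<Rightarrow> bool" where
  "contraction_map f \<longleftrightarrow> (\<exists>C<1. C-lipschitz_on UNIV f)"

definition attractor :: "'i set \<Rightarrow> ('i \<Rightarrow> 'a::metric_space \<Rightarrow> 'a) \<Rightarrow> 'a set" where
  "attractor I T = (THE K. K \<noteq> {} \<and> compact K \<and> K = (\<Union>k\<in>I. T k ` K))"

definition sim_dim :: "'i set \<Rightarrow> ('i \<Rightarrow> real) \<Rightarrow> real" where
  "sim_dim I r = (THE s. (\<Sum>k\<in>I. r k powr s) = 1)"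

end

theory Submission
  imports Defs
begin



lemma Lip_props:
  fixes f :: "'a::metric_space \<Rightarrow> 'a"
  assumes "contraction_map f"
  shows "0 \<le> Lip f" "Lip f < 1" "(Lip f)-lipschitz_on UNIV f"
proof -
  obtain C where C: "C < 1" "C-lipschitz_on UNIV f" using assms unfolding contraction_map_def by blast
  define X where "X = {C. C-lipschitz_on UNIV f}"
  have ne: "X \<noteq> {}" using C X_def by blast
  have bdd: "bdd_below X" unfolding X_def bdd_below_def lipschitz_on_def by (rule exI[of _ 0]) auto
  have LX: "Lip f = Inf X" unfolding Lip_def X_def ..
  show "0 \<le> Lip f" unfolding LX by (rule cInf_greatest[OF ne]) (auto simp: X_def lipschitz_on_def)
  show "Lip f < 1" unfolding LX using cInf_lower[OF _ bdd, of C] C X_def by force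
  show "(Lip f)-lipschitz_on UNIV f"
    unfolding lipschitz_on_def
  proof (intro conjI ballI)
    show "0 \<le> Lip f" unfolding LX by (rule cInf_greatest[OF ne]) (auto simp: X_def lipschitz_on_def)
    fix x y :: 'a
    show "dist (f x) (f y) \<le> Lip f * dist x y"
    proof (cases "dist x y = 0")
      case True then show ?thesis using lipschitz_onD[OF C(2), of x y] by auto
    next
      case False
      then have pos: "dist x y > 0" by (simp add: order_less_le)
      have "dist (f x) (f y) / dist x y \<le> Inf X"
        by (rule cInf_greatest[OF ne]) (use pos in \<open>auto simp: X_def lipschitz_on_def divide_le_eq\<close>)
      then show ?thesis using pos unfolding LX by (simp add: divide_le_eq mult.commute)
    qed
  qed
qed



lemma attr_unique_sub:
  fixes T :: "nat \<Rightarrow> 'a::euclidean_space \<Rightarrow> 'a"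
  assumes c: "0 \<le> c" "c < 1" and lip: "\<And>i. i \<in> I \<Longrightarrow> c-lipschitz_on UNIV (T i)"
    and K1: "compact K1" "K1 = (\<Union>i\<in>I. T i ` K1)"
    and K2: "compact K2" "K2 \<noteq> {}" "K2 = (\<Union>i\<in>I. T i ` K2)"
  shows "K1 \<subseteq> K2"
proof -
  have "bounded (K1 \<union> K2)" using K1 K2 by (simp add: compact_imp_bounded)
  then obtain e where e: "\<And>x. x \<in> K1 \<union> K2 \<Longrightarrow> norm x \<le> e" by (meson bounded_iff)
  define D where "D = 2 * e + 1"
  have D: "\<And>x z. x \<in> K1 \<Longrightarrow> z \<in> K2 \<Longrightarrow> dist x z \<le> D" "D > 0"
  proof -
    fix x z assume "x \<in> K1" "z \<in> K2"
    then have "norm x \<le> e" "norm z \<le> e" using e by auto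
    then show "dist x z \<le> D" unfolding D_def dist_norm using norm_triangle_ineq4[of x z] by linarith
  next
    obtain z where "z \<in> K2" using K2 by blast
    then have "norm z \<le> e" using e by blast
    then show "D > 0" using norm_ge_zero[of z] unfolding D_def by linarith
  qed
  have ind: "\<forall>x\<in>K1. \<exists>z\<in>K2. dist x z \<le> c ^ n * D" for n
  proof (induction n)
    case 0 then show ?case using D K2(2) by auto
  next
    case (Suc n)
    show ?case
    proof
      fix x assume "x \<in> K1"
      then obtain i y where i: "i \<in> I" "y \<in> K1" "x = T i y" using K1(2) by blast
      then obtain z where z: "z \<in> K2" "dist y z \<le> c ^ n * D" using Suc by blast
      have "T i z \<in> K2" using K2(3) i z by blast
      moreover have "dist x (T i z) \<le> c * dist y z" using lipschitz_onD[OF lip[OF i(1)]] i by auto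
      moreover have "c * dist y z \<le> c * (c ^ n * D)" using z c by (simp add: mult_left_mono)
      ultimately show "\<exists>z\<in>K2. dist x z \<le> c ^ Suc n * D" by (metis order_trans power_Suc mult.assoc)
    qed
  qed
  show ?thesis
  proof
    fix x assume x: "x \<in> K1"
    have "x \<in> closure K2" unfolding closure_approachable
    proof (intro allI impI)
      fix r :: real assume "r > 0"
      then obtain n where "c ^ n < r / D" using real_arch_pow_inv[of "r/D" c] c D by auto
      then have "c ^ n * D < r" using D by (simp add: pos_less_divide_eq)
      moreover obtain z where "z \<in> K2" "dist x z \<le> c ^ n * D" using ind x by blast
      ultimately show "\<exists>y\<in>K2. dist y x < r" by (metis dist_commute le_less_trans)
    qed
    then show "x \<in> K2" using K2 by (simp add: compact_imp_closed)
  qed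
qed

lemma attr_exists:
  fixes T :: "nat \<Rightarrow> 'a::euclidean_space \<Rightarrow> 'a"
  assumes I: "finite I" "I \<noteq> {}" and c: "0 \<le> c" "c < 1" and lip: "\<And>i. i \<in> I \<Longrightarrow> c-lipschitz_on UNIV (T i)"
  shows "\<exists>K. K \<noteq> {} \<and> compact K \<and> K = (\<Union>i\<in>I. T i ` K)"
proof -
  define M where "M = Max ((\<lambda>i. norm (T i 0)) ` I)"
  have M: "norm (T i 0) \<le> M" if "i \<in> I" for i unfolding M_def using I that by auto
  have M0: "0 \<le> M" using I M by (meson ex_in_conv norm_ge_zero order_trans)
  define \<rho> where "\<rho> = M / (1 - c)"
  have rho: "c * \<rho> + M = \<rho>" "0 \<le> \<rho>" using c M0 unfolding \<rho>_def by (auto simp: field_simps)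
  define B where "B = cball (0::'a) \<rho>"
  have cont: "continuous_on UNIV (T i)" if "i \<in> I" for i
    using lip[OF that] by (simp add: lipschitz_on_continuous_on)
  have TB: "T i ` B \<subseteq> B" if "i \<in> I" for i
  proof
    fix y assume "y \<in> T i ` B"
    then obtain x where x: "x \<in> B" "y = T i x" by blast
    have "norm (T i x - T i 0) \<le> c * norm x" using lipschitz_onD[OF lip[OF that], of x 0] by (simp add: dist_norm)
    then have "norm (T i x) \<le> c * norm x + M" using M[OF that] norm_triangle_ineq2[of "T i x" "T i 0"] by linarith
    then have "norm y \<le> c * norm x + M" using x by simp
    also have "\<dots> \<le> c * \<rho> + M" using x c by (simp add: B_def mult_left_mono)
    finally show "y \<in> B" using rho by (simp add: B_def)
  qed
  define H where "H = (\<lambda>X. \<Union>i\<in>I. T i ` X)"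
  define A where "A = (\<lambda>n. (H ^^ n) B)"
  have A_Suc: "A (Suc n) = H (A n)" for n by (simp add: A_def)
  have A0: "A 0 = B" by (simp add: A_def)
  have Hmono: "X \<subseteq> Y \<Longrightarrow> H X \<subseteq> H Y" for X Y unfolding H_def by blast
  have Acomp: "compact (A n) \<and> A n \<noteq> {}" for n
  proof (induction n)
    case 0 then show ?case using rho by (simp add: A0 B_def)
  next
    case (Suc n)
    have "compact (H (A n))" unfolding H_def using I Suc cont
      by (intro compact_UN) (auto intro: compact_continuous_image continuous_on_subset)
    moreover have "H (A n) \<noteq> {}" unfolding H_def using I Suc by auto
    ultimately show ?case by (simp add: A_Suc)
  qed
  have Adec: "A (Suc n) \<subseteq> A n" for n
  proof (induction n)
    case 0 then show ?case using TB by (auto simp: A_Suc A0 H_def)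
  next
    case (Suc n) then show ?case by (simp add: A_Suc Hmono)
  qed
  have Amono: "m \<le> n \<Longrightarrow> A n \<subseteq> A m" for m n
    using Adec by (simp add: decseq_SucI decseqD)
  define K where "K = (\<Inter>n. A n)"
  have Kne: "K \<noteq> {}" unfolding K_def using compact_nest[of A] Acomp Amono by blast
  have Kc: "compact K" unfolding K_def using Acomp by (intro compact_Inter) auto
  have "H K \<subseteq> K"
  proof -
    have "H K \<subseteq> A (Suc n)" for n using Hmono[of K "A n"] by (auto simp: K_def A_Suc)
    then have "H K \<subseteq> A n" for n using Adec by (cases n) blast+
    then show ?thesis unfolding K_def by blast
  qed
  moreover have "K \<subseteq> H K"
  proof
    fix x assume x: "x \<in> K"
    have "\<exists>i\<in>I. \<forall>n. x \<in> T i ` A n"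
    proof (rule ccontr)
      assume "\<not> ?thesis"
      then have "\<forall>i\<in>I. \<exists>n. x \<notin> T i ` A n" by blast
      then obtain nf where nf: "\<And>i. i \<in> I \<Longrightarrow> x \<notin> T i ` A (nf i)" by metis
      define N where "N = Max (nf ` I)"
      have "x \<notin> T i ` A N" if "i \<in> I" for i
      proof -
        have "nf i \<le> N" unfolding N_def using I that by auto
        then show ?thesis using nf[OF that] Amono[of "nf i" N] by blast
      qed
      moreover have "x \<in> A (Suc N)" using x K_def by blast
      ultimately show False by (auto simp: A_Suc H_def)
    qed
    then obtain i where i: "i \<in> I" "\<And>n. x \<in> T i ` A n" by blast
    define C where "C = (\<lambda>n. A n \<inter> T i -` {x})"
    have "closed (T i -` {x})" using cont[OF i(1)] by (simp add: closed_vimage)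
    then have "compact (C n)" for n unfolding C_def using Acomp by (simp add: compact_Int_closed)
    moreover have "C n \<noteq> {}" for n unfolding C_def using i by blast
    moreover have "m \<le> n \<Longrightarrow> C n \<subseteq> C m" for m n unfolding C_def using Amono by blast
    ultimately have "\<Inter>(range C) \<noteq> {}" by (intro compact_nest) auto
    then obtain y where "y \<in> \<Inter>(range C)" by blast
    then have "y \<in> K" "T i y = x" unfolding C_def K_def by auto
    then show "x \<in> H K" unfolding H_def using i by blast
  qed
  ultimately show ?thesis using Kne Kc unfolding H_def by blast
qed

lemma attractor_props:
  fixes T :: "nat \<Rightarrow> 'a::euclidean_space \<Rightarrow> 'a"
  assumes I: "finite I" "I \<noteq> {}" and c: "0 \<le> c" "c < 1" and lip: "\<And>i. i \<in> I \<Longrightarrow> c-lipschitz_on UNIV (T i)"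
  shows "attractor I T \<noteq> {} \<and> compact (attractor I T) \<and> attractor I T = (\<Union>i\<in>I. T i ` attractor I T)"
proof -
  have "\<exists>!K. K \<noteq> {} \<and> compact K \<and> K = (\<Union>i\<in>I. T i ` K)"
  proof (rule ex_ex1I)
    show "\<exists>K. K \<noteq> {} \<and> compact K \<and> K = (\<Union>i\<in>I. T i ` K)" by (rule attr_exists[OF I c lip])
  next
    fix K1 K2 assume "K1 \<noteq> {} \<and> compact K1 \<and> K1 = (\<Union>i\<in>I. T i ` K1)" "K2 \<noteq> {} \<and> compact K2 \<and> K2 = (\<Union>i\<in>I. T i ` K2)"
    then have a: "K1 \<noteq> {}" "compact K1" "K1 = (\<Union>i\<in>I. T i ` K1)" "K2 \<noteq> {}" "compact K2" "K2 = (\<Union>i\<in>I. T i ` K2)" by auto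
    show "K1 = K2"
      using attr_unique_sub[OF c lip a(2,3) a(5,4,6)] attr_unique_sub[OF c lip a(5,6) a(2,1,3)] by blast
  qed
  then show ?thesis unfolding attractor_def by (rule theI')
qed



lemma exists_p:
  fixes r :: "nat \<Rightarrow> real" and I :: "nat set"
  assumes I: "finite I" and r: "\<And>j. j \<in> I \<Longrightarrow> 0 \<le> r j \<and> r j < 1" and sd: "sim_dim I r < q" and q: "0 < q"
  shows "\<exists>p>0. p < q \<and> (\<Sum>j\<in>I. r j powr p) < 1"
proof -
  define P where "P = {j\<in>I. r j > 0}"
  have P: "finite P" "P \<subseteq> I" using I by (auto simp: P_def)
  have Pr: "0 < r j" "r j < 1" if "j \<in> P" for j using that r by (auto simp: P_def)
  define f where "f = (\<lambda>s. \<Sum>j\<in>P. r j powr s)"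
  have fI: "(\<Sum>j\<in>I. r j powr s) = f s" for s
    unfolding f_def using P I r by (intro sum.mono_neutral_right) (auto simp: P_def, force)
  show ?thesis
  proof (cases "P = {}")
    case True
    then show ?thesis using q by (intro exI[of _ "q/2"]) (auto simp: fI f_def)
  next
    case False
    have fdec: "f s' < f s" if "s < s'" for s s'
      unfolding f_def using False P Pr that by (intro sum_strict_mono) (auto intro: powr_less_mono')
    have f0: "f 0 \<ge> 1"
    proof -
      have "f 0 = (\<Sum>j\<in>P. 1)" unfolding f_def using Pr by (intro sum.cong) (auto simp: order_less_imp_not_eq2)
      then have "f 0 = real (card P)" by simp
      moreover have "card P \<ge> 1" using False P by (simp add: Suc_leI card_gt_0_iff)
      ultimately show ?thesis by simp
    qed
    define c0 where "c0 = Max (r ` P)"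
    have c0: "c0 < 1" "r j \<le> c0" if "j \<in> P" for j
    proof -
      have "c0 \<in> r ` P" unfolding c0_def using P False by (intro Max_in) auto
      then show "c0 < 1" using Pr by auto
      show "r j \<le> c0" unfolding c0_def using P that by auto
    qed
    obtain j0 where j0: "j0 \<in> P" using False by blast
    have c00: "0 < c0" using c0(2)[OF j0] Pr[OF j0] by linarith
    obtain n where n: "c0 ^ n < 1 / real (card P)" using real_arch_pow_inv[of "1 / real (card P)" c0] c0 j0 P False
      by (auto simp: card_gt_0_iff)
    have "f (real n) \<le> (\<Sum>j\<in>P. c0 powr real n)" unfolding f_def
      by (intro sum_mono powr_mono2) (use Pr c0 in \<open>auto simp: less_imp_le\<close>)
    also have "\<dots> = real (card P) * c0 ^ n" using c00 by (simp add: powr_realpow)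
    also have "\<dots> \<le> 1" using n P False by (simp add: card_gt_0_iff pos_less_divide_eq mult.commute less_imp_le)
    finally have fn: "f (real n) \<le> 1" .
    define S where "S = real n"
    have fS: "f S \<le> 1" "S \<ge> 0" using fn by (auto simp: S_def)
    have cont: "continuous_on {0..S} f" unfolding f_def using Pr
      by (intro continuous_intros) (auto dest: Pr(1) simp: order_less_imp_not_eq2)
    obtain s0 where s0: "0 \<le> s0" "s0 \<le> S" "f s0 = 1" using IVT2'[of f S 1 0, OF fS(1) f0 fS(2) cont] by auto
    have "sim_dim I r = s0" unfolding sim_dim_def fI
    proof (rule the_equality)
      show "f s0 = 1" by fact
      fix s assume "f s = 1"
      then show "s = s0" using fdec[of s s0] fdec[of s0 s] s0(3) by (cases "s < s0"; cases "s0 < s") auto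
    qed
    then have "s0 < q" using sd by simp
    define p where "p = (s0 + q) / 2"
    have "f p < 1" using fdec[of s0 p] s0 \<open>s0 < q\<close> by (simp add: p_def)
    then show ?thesis using s0 q \<open>s0 < q\<close> by (intro exI[of _ p]) (auto simp: fI p_def)
  qed
qed



fun wcomp :: "(nat \<Rightarrow> 'a \<Rightarrow> 'a) \<Rightarrow> nat list \<Rightarrow> 'a \<Rightarrow> 'a" where
  "wcomp T [] = id"
| "wcomp T (i # w) = T i \<circ> wcomp T w"

definition rho :: "(nat \<Rightarrow> real) \<Rightarrow> nat list \<Rightarrow> real" where
  "rho a w = prod_list (map a w)"

lemma rho_simps [simp]: "rho a [] = 1" "rho a (i # w) = a i * rho a w" "rho a (u @ v) = rho a u * rho a v"
  by (auto simp: rho_def)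

lemma wcomp_append: "wcomp T (u @ v) = wcomp T u \<circ> wcomp T v"
  by (induction u) auto

lemma rho_nonneg: "(\<And>i. i \<in> set w \<Longrightarrow> 0 \<le> a i) \<Longrightarrow> 0 \<le> rho a w"
  by (induction w) auto

lemma wcomp_lip:
  fixes T :: "nat \<Rightarrow> 'a::metric_space \<Rightarrow> 'a"
  assumes "\<And>i. i \<in> set w \<Longrightarrow> (a i)-lipschitz_on UNIV (T i)"
  shows "dist (wcomp T w x) (wcomp T w y) \<le> rho a w * dist x y"
  using assms
proof (induction w)
  case Nil then show ?case by simp
next
  case (Cons i w)
  have L: "(a i)-lipschitz_on UNIV (T i)" using Cons by simp
  have "dist (wcomp T (i # w) x) (wcomp T (i # w) y) \<le> a i * dist (wcomp T w x) (wcomp T w y)"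
    using lipschitz_onD[OF L] by simp
  also have "\<dots> \<le> a i * (rho a w * dist x y)"
    using Cons lipschitz_on_nonneg[OF L] by (intro mult_left_mono) auto
  finally show ?case by (simp add: mult.assoc)
qed

lemma inv_into:
  assumes K: "K = (\<Union>i\<in>I. T i ` K)" and "i \<in> I" "x \<in> K"
  shows "T i x \<in> K"
proof -
  have "T i x \<in> (\<Union>i\<in>I. T i ` K)" using assms(2,3) by blast
  then show ?thesis by (rule subst[where P="\<lambda>A. T i x \<in> A", OF K[symmetric]])
qed

lemma inv_out:
  assumes K: "K = (\<Union>i\<in>I. T i ` K)" and "y \<in> K"
  shows "\<exists>i\<in>I. \<exists>x\<in>K. y = T i x"
proof -
  have "y \<in> (\<Union>i\<in>I. T i ` K)" using assms(2) by (rule subst[where P="\<lambda>A. y \<in> A", OF K])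
  then show ?thesis by blast
qed

lemma wcomp_into:
  assumes K: "K = (\<Union>i\<in>I. T i ` K)" and "set w \<subseteq> I" and "y \<in> K"
  shows "wcomp T w y \<in> K"
  using assms(2,3)
proof (induction w)
  case Nil then show ?case by simp
next
  case (Cons i w)
  then have "T i (wcomp T w y) \<in> K" using inv_into[OF K] by simp
  then show ?case by simp
qed

lemma wcomp_decomp:
  assumes K: "K = (\<Union>i\<in>I. T i ` K)"
  shows "y \<in> K \<Longrightarrow> \<exists>u y'. length u = L \<and> set u \<subseteq> I \<and> y' \<in> K \<and> y = wcomp T u y'"
proof (induction L arbitrary: y)
  case 0 then show ?case by (intro exI[of _ "[]"]) auto
next
  case (Suc L)
  then obtain i y1 where i: "i \<in> I" "y1 \<in> K" "y = T i y1" using inv_out[OF K] by blast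
  then obtain u y' where u: "length u = L" "set u \<subseteq> I" "y' \<in> K" "y1 = wcomp T u y'" using Suc by blast
  have "y = wcomp T (i # u) y'" using i(3) u(4) by simp
  moreover have "length (i # u) = Suc L" "set (i # u) \<subseteq> I" using u(1,2) i(1) by auto
  ultimately show ?case using u(3) by blast
qed

lemma rho_le_pow: "(\<And>i. i \<in> set w \<Longrightarrow> 0 \<le> a i \<and> a i \<le> c) \<Longrightarrow> rho a w \<le> c ^ length w"
proof (induction w)
  case Nil then show ?case by simp
next
  case (Cons i w)
  then have "0 \<le> rho a w" "rho a w \<le> c ^ length w" "0 \<le> a i" "a i \<le> c" by (auto intro: rho_nonneg)
  then have "a i * rho a w \<le> c * c ^ length w" by (intro mult_mono) auto
  then show ?case by simp
qed

lemma rho_prefix: "(\<And>i. i \<in> set v \<Longrightarrow> 0 \<le> a i \<and> a i \<le> 1) \<Longrightarrow> (\<And>i. i \<in> set u \<Longrightarrow> 0 \<le> a i) \<Longrightarrow> rho a (u @ v) \<le> rho a u"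
proof -
  assume v: "\<And>i. i \<in> set v \<Longrightarrow> 0 \<le> a i \<and> a i \<le> 1" and u: "\<And>i. i \<in> set u \<Longrightarrow> 0 \<le> a i"
  have "rho a v \<le> 1 ^ length v" using v by (intro rho_le_pow) auto
  then show ?thesis using rho_nonneg[OF u] by (simp add: mult_left_le)
qed

lemma rho_powr: "(\<And>i. i \<in> set w \<Longrightarrow> 0 \<le> a i) \<Longrightarrow> rho a w powr p = prod_list (map (\<lambda>i. a i powr p) w)"
  by (induction w) (auto simp: powr_mult)

lemma prefix_free_sum:
  fixes b :: "nat \<Rightarrow> real"
  assumes I: "finite I" and b: "\<And>i. i \<in> I \<Longrightarrow> 0 \<le> b i" and bs: "(\<Sum>i\<in>I. b i) \<le> 1"
  shows "finite A \<Longrightarrow> (\<And>w. w \<in> A \<Longrightarrow> set w \<subseteq> I \<and> length w \<le> N)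
    \<Longrightarrow> (\<And>u v z. u \<in> A \<Longrightarrow> v \<in> A \<Longrightarrow> v = u @ z \<Longrightarrow> z = [])
    \<Longrightarrow> (\<Sum>w\<in>A. prod_list (map b w)) \<le> 1"
proof (induction N arbitrary: A)
  case 0
  then have "A \<subseteq> {[]}" by auto
  then have "A = {} \<or> A = {[]}" by blast
  then show ?case by auto
next
  case (Suc N)
  show ?case
  proof (cases "[] \<in> A")
    case True
    then have "A = {[]}" using Suc.prems(3)[of "[]"] by auto
    then show ?thesis by simp
  next
    case False
    define Ai where "Ai = (\<lambda>i. Cons i -` A)"
    have fin: "finite (Ai i)" for i unfolding Ai_def using Suc.prems(1) by (intro finite_vimageI) auto
    have IH: "(\<Sum>v\<in>Ai i. prod_list (map b v)) \<le> 1" for i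
    proof (rule Suc.IH[OF fin])
      fix w assume "w \<in> Ai i"
      then show "set w \<subseteq> I \<and> length w \<le> N" using Suc.prems(2)[of "i # w"] by (auto simp: Ai_def)
    next
      fix u v z assume "u \<in> Ai i" "v \<in> Ai i" "v = u @ z"
      then show "z = []" using Suc.prems(3)[of "i # u" "i # v" z] by (auto simp: Ai_def)
    qed
    have hd: "hd ` A \<subseteq> I"
    proof
      fix x assume "x \<in> hd ` A"
      then obtain w where "w \<in> A" "x = hd w" by blast
      then show "x \<in> I" using False Suc.prems(2)[of w] by (cases w) auto
    qed
    have grp: "{w \<in> A. hd w = i} = Cons i ` Ai i" for i
      using False unfolding Ai_def by (auto simp: image_iff) (metis list.collapse list.sel(1))
    have "(\<Sum>w\<in>A. prod_list (map b w)) = (\<Sum>i\<in>I. \<Sum>w\<in>{w \<in> A. hd w = i}. prod_list (map b w))"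
      using sum.group[OF Suc.prems(1) I hd, of "\<lambda>w. prod_list (map b w)"] by simp
    also have "\<dots> = (\<Sum>i\<in>I. b i * (\<Sum>v\<in>Ai i. prod_list (map b v)))"
      by (intro sum.cong refl) (simp add: grp sum.reindex sum_distrib_left)
    also have "\<dots> \<le> (\<Sum>i\<in>I. b i)"
      by (intro sum_mono) (use IH b in \<open>auto intro: mult_left_le\<close>)
    finally show ?thesis using bs by linarith
  qed
qed

definition moran :: "(nat \<Rightarrow> real) \<Rightarrow> nat set \<Rightarrow> real \<Rightarrow> nat \<Rightarrow> nat list set" where
  "moran a I \<epsilon> N = {w. set w \<subseteq> I \<and> length w \<le> N \<and> w \<noteq> [] \<and> rho a w \<le> \<epsilon> \<and> \<epsilon> < rho a (butlast w)}"

lemma moran_finite: "finite I \<Longrightarrow> finite (moran a I \<epsilon> N)"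
  unfolding moran_def by (rule finite_subset[OF _ finite_lists_length_le[of I N]]) auto

lemma moran_cover:
  assumes K: "K = (\<Union>i\<in>I. T i ` K)" and y: "y \<in> K"
    and a: "\<And>i. i \<in> I \<Longrightarrow> 0 \<le> a i \<and> a i \<le> c" and N: "c ^ N \<le> \<epsilon>" and eps: "\<epsilon> < 1"
  shows "\<exists>w\<in>moran a I \<epsilon> N. \<exists>y'\<in>K. y = wcomp T w y'"
proof -
  obtain u y' where u: "length u = N" "set u \<subseteq> I" "y' \<in> K" "y = wcomp T u y'"
    using wcomp_decomp[OF K y] by blast
  have "rho a u \<le> c ^ length u" using a u(2) by (intro rho_le_pow) auto
  then have "rho a (take N u) \<le> \<epsilon>" using N u(1) by simp
  define j where "j = (LEAST j. rho a (take j u) \<le> \<epsilon>)"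
  have j1: "rho a (take j u) \<le> \<epsilon>" unfolding j_def by (rule LeastI) fact
  have jN: "j \<le> N" unfolding j_def by (rule Least_le) fact
  have j0: "j \<noteq> 0"
  proof
    assume "j = 0"
    then show False using j1 eps by simp
  qed
  have "j - 1 < (LEAST j. rho a (take j u) \<le> \<epsilon>)" using j0 by (simp add: j_def[symmetric])
  then have "\<not> rho a (take (j - 1) u) \<le> \<epsilon>" by (rule not_less_Least)
  then have j2: "\<epsilon> < rho a (take (j - 1) u)" by simp
  define w where "w = take j u"
  have "u \<noteq> []"
  proof
    assume "u = []"
    then have "N = 0" using u(1) by simp
    then show False using j0 jN by simp
  qed
  then have w: "w \<noteq> []" using j0 unfolding w_def by simp
  have jl: "j \<le> length u" using jN u(1) by linarith
  have bw: "butlast w = take (j - 1) u" unfolding w_def by (rule butlast_take[OF jl])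
  have "set w \<subseteq> I" using u(2) set_take_subset[of j u] unfolding w_def by blast
  moreover have "length w \<le> N" using jN u(1) unfolding w_def by simp
  moreover have "rho a w \<le> \<epsilon>" using j1 unfolding w_def .
  moreover have "\<epsilon> < rho a (butlast w)" using j2 unfolding bw .
  ultimately have "w \<in> moran a I \<epsilon> N" unfolding moran_def using w by blast
  moreover have "wcomp T (drop j u) y' \<in> K"
    using wcomp_into[OF K _ u(3)] u(2) set_drop_subset[of j u] by blast
  moreover have "y = wcomp T w (wcomp T (drop j u) y')"
  proof -
    have "y = wcomp T (take j u @ drop j u) y'" using u(4) by simp
    also have "\<dots> = wcomp T (take j u) (wcomp T (drop j u) y')" by (simp only: wcomp_append o_apply)
    finally show ?thesis unfolding w_def .
  qed
  ultimately show ?thesis by blast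
qed

lemma moran_card:
  assumes I: "finite I" and a: "\<And>i. i \<in> I \<Longrightarrow> \<eta> \<le> a i \<and> a i \<le> 1" and eta: "0 < \<eta>"
    and p: "0 < p" and ps: "(\<Sum>i\<in>I. a i powr p) \<le> 1" and eps: "0 < \<epsilon>"
  shows "real (card (moran a I \<epsilon> N)) * (\<epsilon> * \<eta>) powr p \<le> 1"
proof -
  let ?W = "moran a I \<epsilon> N"
  have fin: "finite ?W" by (rule moran_finite[OF I])
  have low: "(\<epsilon> * \<eta>) powr p \<le> rho a w powr p" if "w \<in> ?W" for w
  proof -
    have w: "w \<noteq> []" "set w \<subseteq> I" "\<epsilon> < rho a (butlast w)" using that by (auto simp: moran_def)
    have "last w \<in> I" using w by auto
    then have "\<eta> \<le> a (last w)" using a by auto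
    have "rho a w = rho a (butlast w) * a (last w)"
      using rho_simps(3)[of a "butlast w" "[last w]"] append_butlast_last_id[OF w(1)] by simp
    moreover have "\<epsilon> * \<eta> \<le> rho a (butlast w) * a (last w)"
      using w(3) \<open>\<eta> \<le> a (last w)\<close> eps eta by (intro mult_mono) auto
    ultimately show ?thesis using eps eta p by (intro powr_mono2) auto
  qed
  have "real (card ?W) * (\<epsilon> * \<eta>) powr p \<le> (\<Sum>w\<in>?W. rho a w powr p)"
    using sum_bounded_below[of ?W "(\<epsilon> * \<eta>) powr p" "\<lambda>w. rho a w powr p"] low by auto
  also have "\<dots> = (\<Sum>w\<in>?W. prod_list (map (\<lambda>i. a i powr p) w))"
  proof (intro sum.cong refl rho_powr)
    fix w i assume "w \<in> ?W" "i \<in> set w"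
    then show "0 \<le> a i" using a eta by (force simp: moran_def)
  qed
  also have "\<dots> \<le> 1"
  proof (rule prefix_free_sum[OF I _ ps fin])
    show "0 \<le> a i powr p" for i by simp
    fix w assume "w \<in> ?W"
    then show "set w \<subseteq> I \<and> length w \<le> N" by (auto simp: moran_def)
  next
    fix u v z assume uv: "u \<in> ?W" "v \<in> ?W" "v = u @ z"
    show "z = []"
    proof (rule ccontr)
      assume z: "z \<noteq> []"
      have "butlast v = u @ butlast z" using uv z by (simp add: butlast_append)
      moreover have "rho a (u @ butlast z) \<le> rho a u"
      proof (rule rho_prefix)
        fix i assume "i \<in> set (butlast z)"
        then have "i \<in> set v" using uv(3) in_set_butlastD by fastforce
        then show "0 \<le> a i \<and> a i \<le> 1" using uv(2) a eta by (force simp: moran_def)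
      next
        fix i assume "i \<in> set u"
        then show "0 \<le> a i" using uv(1) a eta by (force simp: moran_def)
      qed
      ultimately show False using uv by (auto simp: moran_def)
    qed
  qed
  finally show ?thesis .
qed



lemma lip_shift:
  fixes S :: "nat \<Rightarrow> 'a::real_normed_vector \<Rightarrow> 'a"
  assumes "L-lipschitz_on UNIV (S i)"
  shows "L-lipschitz_on UNIV ((S(m := (\<lambda>x. S m x + t))) i)"
proof (cases "i = m")
  case True
  then show ?thesis using assms unfolding lipschitz_on_def by (simp add: dist_norm)
next
  case False
  then show ?thesis using assms by simp
qed

lemma wcomp_t_diff:
  fixes S :: "nat \<Rightarrow> 'a::real_normed_vector \<Rightarrow> 'a"
  assumes lip: "\<And>i. i \<in> set w \<Longrightarrow> (a i)-lipschitz_on UNIV (S i) \<and> a i \<le> c" and c: "c < 1"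
  shows "norm (wcomp (S(m := (\<lambda>x. S m x + t))) w x - wcomp (S(m := (\<lambda>x. S m x + t'))) w x) \<le> norm (t - t') / (1 - c)"
  using lip
proof (induction w)
  case Nil then show ?case using c by simp
next
  case (Cons i w)
  define P where "P = wcomp (S(m := (\<lambda>x. S m x + t))) w x"
  define P' where "P' = wcomp (S(m := (\<lambda>x. S m x + t'))) w x"
  have IH: "norm (P - P') \<le> norm (t - t') / (1 - c)" unfolding P_def P'_def by (rule Cons.IH) (use Cons.prems in auto)
  have L: "(a i)-lipschitz_on UNIV (S i)" "a i \<le> c" using Cons.prems by auto
  have ai: "0 \<le> a i" using lipschitz_on_nonneg[OF L(1)] .
  have SL: "norm (S i P - S i P') \<le> a i * norm (P - P')" using lipschitz_onD[OF L(1), of P P'] by (simp add: dist_norm)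
  have "norm ((S(m := (\<lambda>x. S m x + t))) i P - (S(m := (\<lambda>x. S m x + t'))) i P') \<le> norm (S i P - S i P') + norm (t - t')"
  proof (cases "i = m")
    case True
    have "(S(m := (\<lambda>x. S m x + t))) i P - (S(m := (\<lambda>x. S m x + t'))) i P' = (S i P - S i P') + (t - t')"
      using True by simp
    then show ?thesis by (metis norm_triangle_ineq)
  next
    case False then show ?thesis by simp
  qed
  also have "\<dots> \<le> c * (norm (t - t') / (1 - c)) + norm (t - t')"
  proof -
    have "a i * norm (P - P') \<le> c * (norm (t - t') / (1 - c))"
      using IH L(2) ai c by (intro mult_mono) auto
    then show ?thesis using SL by linarith
  qed
  also have "\<dots> = norm (t - t') / (1 - c)" using c by (simp add: field_simps)
  finally have X: "norm ((S(m := (\<lambda>x. S m x + t))) i P - (S(m := (\<lambda>x. S m x + t'))) i P') \<le> norm (t - t') / (1 - c)" .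
  show ?case using X unfolding P_def P'_def by (simp only: wcomp.simps o_apply)
qed

lemma attr_bound:
  fixes S :: "nat \<Rightarrow> 'a::real_normed_vector \<Rightarrow> 'a"
  assumes K: "compact K" "K \<noteq> {}" "K = (\<Union>i\<in>I. T i ` K)"
    and lip: "\<And>i. i \<in> I \<Longrightarrow> c-lipschitz_on UNIV (T i)" and c: "c < 1"
    and M: "\<And>i. i \<in> I \<Longrightarrow> norm (T i 0) \<le> M"
    and y: "y \<in> K"
  shows "norm y \<le> M / (1 - c)"
proof -
  obtain x0 where x0: "x0 \<in> K" "\<And>y. y \<in> K \<Longrightarrow> norm y \<le> norm x0"
    using continuous_attains_sup[OF K(1,2), of norm] by (auto intro: continuous_intros)
  then obtain i y0 where i: "i \<in> I" "y0 \<in> K" "x0 = T i y0" using K(3) by blast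
  have "norm (T i y0 - T i 0) \<le> c * norm y0" using lipschitz_onD[OF lip[OF i(1)], of y0 0] by (simp add: dist_norm)
  moreover have "norm (T i y0) \<le> norm (T i y0 - T i 0) + norm (T i 0)" using norm_triangle_ineq2[of "T i y0" "T i 0"] by linarith
  moreover have "c * norm y0 \<le> c * norm x0" using x0(2)[OF i(2)] lipschitz_on_nonneg[OF lip[OF i(1)]] by (intro mult_left_mono) auto
  ultimately have "norm x0 \<le> c * norm x0 + M" using M[OF i(1)] i(3) by simp
  then have "norm x0 * (1 - c) \<le> M" by (simp add: algebra_simps)
  then have "norm x0 \<le> M / (1 - c)" using c by (simp add: pos_le_divide_eq)
  then show ?thesis using x0(2)[OF y] by linarith
qed

lemma F_bound:
  fixes S :: "nat \<Rightarrow> 'a::real_normed_vector \<Rightarrow> 'a"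
  assumes lip: "\<And>i. i \<in> I \<Longrightarrow> (a i)-lipschitz_on UNIV (S i)"
    and km: "k \<in> I" "m \<in> I" "k \<noteq> m" and ak: "a k \<le> 1" and am: "a m \<le> 1"
    and w: "set w \<subseteq> I" "set w' \<subseteq> I"
    and h: "S k (wcomp (S(m := (\<lambda>x. S m x + t))) w y) = S m (wcomp (S(m := (\<lambda>x. S m x + t))) w' z) + t"
    and y: "norm y \<le> D" and z: "norm z \<le> D"
  shows "norm (S k (wcomp (S(m := (\<lambda>x. S m x + t))) w 0) - S m (wcomp (S(m := (\<lambda>x. S m x + t))) w' 0) - t)
    \<le> (rho a w + rho a w') * D"
proof -
  let ?T = "S(m := (\<lambda>x. S m x + t))"
  have lipT: "(a i)-lipschitz_on UNIV (?T i)" if "i \<in> I" for i using lip_shift[where S=S and i=i and m=m and t=t and L="a i"] lip[OF that] by blast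
  have rw: "rho a w \<ge> 0" "rho a w' \<ge> 0"
    by (intro rho_nonneg; meson lip lipschitz_on_nonneg subsetD w)+
  have d1: "norm (wcomp ?T w 0 - wcomp ?T w y) \<le> rho a w * D"
  proof -
    have "dist (wcomp ?T w 0) (wcomp ?T w y) \<le> rho a w * dist 0 y" by (rule wcomp_lip) (use w lipT in blast)
    moreover have "rho a w * dist 0 y \<le> rho a w * D" using rw y by (intro mult_left_mono) (auto simp: dist_norm)
    ultimately have "dist (wcomp ?T w 0) (wcomp ?T w y) \<le> rho a w * D" by linarith
    then show ?thesis by (simp add: dist_norm)
  qed
  have d2: "norm (wcomp ?T w' 0 - wcomp ?T w' z) \<le> rho a w' * D"
  proof -
    have "dist (wcomp ?T w' 0) (wcomp ?T w' z) \<le> rho a w' * dist 0 z" by (rule wcomp_lip) (use w lipT in blast)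
    moreover have "rho a w' * dist 0 z \<le> rho a w' * D" using rw z by (intro mult_left_mono) (auto simp: dist_norm)
    ultimately have "dist (wcomp ?T w' 0) (wcomp ?T w' z) \<le> rho a w' * D" by linarith
    then show ?thesis by (simp add: dist_norm)
  qed
  have e1: "norm (S k (wcomp ?T w 0) - S k (wcomp ?T w y)) \<le> rho a w * D"
  proof -
    have "norm (S k (wcomp ?T w 0) - S k (wcomp ?T w y)) \<le> a k * norm (wcomp ?T w 0 - wcomp ?T w y)"
      using lipschitz_onD[OF lip[OF km(1)]] by (simp add: dist_norm)
    also have "\<dots> \<le> 1 * (rho a w * D)" using d1 ak lipschitz_on_nonneg[OF lip[OF km(1)]] by (intro mult_mono) auto
    finally show ?thesis by simp
  qed
  have e2: "norm (S m (wcomp ?T w' 0) - S m (wcomp ?T w' z)) \<le> rho a w' * D"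
  proof -
    have "norm (S m (wcomp ?T w' 0) - S m (wcomp ?T w' z)) \<le> a m * norm (wcomp ?T w' 0 - wcomp ?T w' z)"
      using lipschitz_onD[OF lip[OF km(2)]] by (simp add: dist_norm)
    also have "\<dots> \<le> 1 * (rho a w' * D)" using d2 am lipschitz_on_nonneg[OF lip[OF km(2)]] by (intro mult_mono) auto
    finally show ?thesis by simp
  qed
  have "S k (wcomp ?T w 0) - S m (wcomp ?T w' 0) - t
      = (S k (wcomp ?T w 0) - S k (wcomp ?T w y)) - (S m (wcomp ?T w' 0) - S m (wcomp ?T w' z))"
    using h by (simp add: algebra_simps)
  then have "norm (S k (wcomp ?T w 0) - S m (wcomp ?T w' 0) - t)
      \<le> norm (S k (wcomp ?T w 0) - S k (wcomp ?T w y)) + norm (S m (wcomp ?T w' 0) - S m (wcomp ?T w' z))"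
    by (metis norm_triangle_ineq4)
  also have "\<dots> \<le> rho a w * D + rho a w' * D" using e1 e2 by linarith
  also have "\<dots> = (rho a w + rho a w') * D" by (simp add: distrib_right)
  finally show ?thesis .
qed

lemma pair_close:
  fixes S :: "nat \<Rightarrow> 'a::real_normed_vector \<Rightarrow> 'a"
  assumes lip: "\<And>i. i \<in> I \<Longrightarrow> (a i)-lipschitz_on UNIV (S i) \<and> a i \<le> c" and c: "c < 1"
    and km: "k \<in> I" "m \<in> I" "k \<noteq> m" and ak: "a k \<le> 1" and am: "a m \<le> 1"
    and w: "set w \<subseteq> I" "set w' \<subseteq> I"
    and F1: "norm (S k (wcomp (S(m := (\<lambda>x. S m x + t1))) w 0) - S m (wcomp (S(m := (\<lambda>x. S m x + t1))) w' 0) - t1) \<le> B"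
    and F2: "norm (S k (wcomp (S(m := (\<lambda>x. S m x + t2))) w 0) - S m (wcomp (S(m := (\<lambda>x. S m x + t2))) w' 0) - t2) \<le> B"
  shows "norm (t1 - t2) * (1 - (a k + a m) / (1 - c)) \<le> 2 * B"
proof -
  define P1 where "P1 = wcomp (S(m := (\<lambda>x. S m x + t1))) w 0"
  define P2 where "P2 = wcomp (S(m := (\<lambda>x. S m x + t2))) w 0"
  define Q1 where "Q1 = wcomp (S(m := (\<lambda>x. S m x + t1))) w' 0"
  define Q2 where "Q2 = wcomp (S(m := (\<lambda>x. S m x + t2))) w' 0"
  have lk: "(a k)-lipschitz_on UNIV (S k)" and lm: "(a m)-lipschitz_on UNIV (S m)" using lip km by auto
  have dP: "norm (P1 - P2) \<le> norm (t1 - t2) / (1 - c)" unfolding P1_def P2_def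
    using w lip c by (intro wcomp_t_diff) auto
  have dQ: "norm (Q1 - Q2) \<le> norm (t1 - t2) / (1 - c)" unfolding Q1_def Q2_def
    using w lip c by (intro wcomp_t_diff) auto
  have sP: "norm (S k P1 - S k P2) \<le> a k * (norm (t1 - t2) / (1 - c))"
  proof -
    have "norm (S k P1 - S k P2) \<le> a k * norm (P1 - P2)" using lipschitz_onD[OF lk] by (simp add: dist_norm)
    also have "\<dots> \<le> a k * (norm (t1 - t2) / (1 - c))" using dP lipschitz_on_nonneg[OF lk] by (intro mult_left_mono)
    finally show ?thesis .
  qed
  have sQ: "norm (S m Q1 - S m Q2) \<le> a m * (norm (t1 - t2) / (1 - c))"
  proof -
    have "norm (S m Q1 - S m Q2) \<le> a m * norm (Q1 - Q2)" using lipschitz_onD[OF lm] by (simp add: dist_norm)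
    also have "\<dots> \<le> a m * (norm (t1 - t2) / (1 - c))" using dQ lipschitz_on_nonneg[OF lm] by (intro mult_left_mono)
    finally show ?thesis .
  qed
  have eq: "t1 - t2 = (S k P1 - S k P2) - (S m Q1 - S m Q2) - ((S k P1 - S m Q1 - t1) - (S k P2 - S m Q2 - t2))"
    by (simp add: algebra_simps)
  have "norm (t1 - t2) \<le> norm (S k P1 - S k P2) + norm (S m Q1 - S m Q2) + (norm (S k P1 - S m Q1 - t1) + norm (S k P2 - S m Q2 - t2))"
  proof -
    have n: "norm (t1 - t2) = norm ((S k P1 - S k P2) - (S m Q1 - S m Q2) - ((S k P1 - S m Q1 - t1) - (S k P2 - S m Q2 - t2)))"
      using eq by (rule arg_cong)
    have a1: "norm ((S k P1 - S k P2) - (S m Q1 - S m Q2) - ((S k P1 - S m Q1 - t1) - (S k P2 - S m Q2 - t2)))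
      \<le> norm ((S k P1 - S k P2) - (S m Q1 - S m Q2)) + norm ((S k P1 - S m Q1 - t1) - (S k P2 - S m Q2 - t2))"
      by (rule norm_triangle_ineq4)
    have a2: "norm ((S k P1 - S k P2) - (S m Q1 - S m Q2)) \<le> norm (S k P1 - S k P2) + norm (S m Q1 - S m Q2)"
      by (rule norm_triangle_ineq4)
    have a3: "norm ((S k P1 - S m Q1 - t1) - (S k P2 - S m Q2 - t2)) \<le> norm (S k P1 - S m Q1 - t1) + norm (S k P2 - S m Q2 - t2)"
      by (rule norm_triangle_ineq4)
    show ?thesis using n a1 a2 a3 by linarith
  qed
  also have "\<dots> \<le> a k * (norm (t1 - t2) / (1 - c)) + a m * (norm (t1 - t2) / (1 - c)) + 2 * B"
    using sP sQ F1 F2 unfolding P1_def P2_def Q1_def Q2_def by linarith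
  finally have f: "norm (t1 - t2) \<le> a k * (norm (t1 - t2) / (1 - c)) + a m * (norm (t1 - t2) / (1 - c)) + 2 * B" .
  have e1: "(a k + a m) / (1 - c) * norm (t1 - t2) = a k * (norm (t1 - t2) / (1 - c)) + a m * (norm (t1 - t2) / (1 - c))"
    by (simp add: add_divide_distrib distrib_right)
  have e2: "norm (t1 - t2) * (1 - (a k + a m) / (1 - c)) = norm (t1 - t2) - (a k + a m) / (1 - c) * norm (t1 - t2)"
    by (simp add: algebra_simps)
  show ?thesis using f e1 e2 by linarith
qed





theorem corollary6:
  fixes S :: "nat \<Rightarrow> real^'n \<Rightarrow> real^'n" and m k :: nat
  assumes contr: "\<And>j. j \<in> {1..m} \<Longrightarrow> contraction_map (S j)"
    and k: "1 \<le> k" "k < m"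
    and small: "Lip (S k) + Lip (S m) + Max ((\<lambda>j. Lip (S j)) ` {1..m}) < 1"
    and dim: "sim_dim {1..m} (\<lambda>j. Lip (S j)) < real CARD('n) / 2"
  shows "AE t in lborel.
           let St = (S(m := (\<lambda>x. S m x + t))) in
           St k ` attractor {1..m} St \<inter> St m ` attractor {1..m} St = {}"
proof -
  define I where "I = {1..m}"
  have finI: "finite I" and kI: "k \<in> I" and mI: "m \<in> I" and km: "k \<noteq> m" and Ine: "I \<noteq> {}"
    using k by (auto simp: I_def)
  have cardI: "card I = m" by (simp add: I_def)
  define r where "r = (\<lambda>j. Lip (S j))"
  have r0: "0 \<le> r j" "r j < 1" "(r j)-lipschitz_on UNIV (S j)" if "j \<in> I" for j
    using Lip_props[OF contr] that by (auto simp: r_def I_def)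
  define rb where "rb = Max (r ` I)"
  have rb_ge: "r j \<le> rb" if "j \<in> I" for j using finI that by (simp add: rb_def)
  have rb1: "rb < 1"
  proof -
    have "rb \<in> r ` I" unfolding rb_def using finI Ine by (intro Max_in) auto
    then show ?thesis using r0 by auto
  qed
  have rb0: "0 \<le> rb" using rb_ge[OF kI] r0[OF kI] by linarith
  have small': "r k + r m + rb < 1" using small by (simp add: r_def rb_def I_def)
  have sd: "sim_dim I r < real CARD('n) / 2" using dim by (simp add: r_def I_def)
  obtain p where p: "0 < p" "p < real CARD('n) / 2" "(\<Sum>j\<in>I. r j powr p) < 1"
    using exists_p[OF finI _ sd] r0 by fastforce
  define gap where "gap = 1 - (r k + r m + rb)"
  have gap: "0 < gap" using small' by (simp add: gap_def)
  define \<sigma> where "\<sigma> = 1 - (\<Sum>j\<in>I. r j powr p)"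
  have sig: "0 < \<sigma>" using p by (simp add: \<sigma>_def)
  have m0: "0 < real m" using k by simp
  define x0 where "x0 = (\<sigma> / real m) powr (1 / p)"
  have x0: "0 < x0" using sig m0 by (simp add: x0_def)
  have x0p: "x0 powr p = \<sigma> / real m"
    using sig m0 p by (simp add: x0_def powr_powr)
  define \<eta> where "\<eta> = min (gap / 4) x0"
  have eta: "0 < \<eta>" "\<eta> \<le> gap / 4" "\<eta> \<le> x0" using gap x0 by (auto simp: \<eta>_def)
  have etap: "\<eta> powr p \<le> \<sigma> / real m"
    using powr_mono2[of p \<eta> x0] eta p x0p by simp
  have gap1: "gap \<le> 1" using gap_def r0[OF kI] r0[OF mI] rb0 by linarith
  define a where "a = (\<lambda>j. max (r j) \<eta>)"
  define c where "c = max rb \<eta>"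
  have c: "0 < c" "c < 1" using eta rb1 gap1 by (auto simp: c_def)
  have aI: "\<eta> \<le> a j" "a j \<le> c" "a j \<le> 1" "0 \<le> a j" "(a j)-lipschitz_on UNIV (S j)" if "j \<in> I" for j
  proof -
    show "\<eta> \<le> a j" by (simp add: a_def)
    show "a j \<le> c" using rb_ge[OF that] by (auto simp: a_def c_def)
    then show "a j \<le> 1" using c by simp
    show "0 \<le> a j" using eta by (simp add: a_def)
    show "(a j)-lipschitz_on UNIV (S j)" using r0(3)[OF that] by (rule lipschitz_on_le) (simp add: a_def)
  qed
  have akm: "a k + a m < 1 - c"
  proof -
    have "a k \<le> r k + \<eta>" "a m \<le> r m + \<eta>" "c \<le> rb + \<eta>" using eta r0[OF kI] r0[OF mI] rb0 by (auto simp: a_def c_def)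
    moreover have "4 * \<eta> \<le> gap" using eta by simp
    ultimately show ?thesis using eta gap gap_def by linarith
  qed
  have asum: "(\<Sum>j\<in>I. a j powr p) \<le> 1"
  proof -
    have "(\<Sum>j\<in>I. a j powr p) \<le> (\<Sum>j\<in>I. r j powr p + \<eta> powr p)"
    proof (rule sum_mono)
      fix j assume "j \<in> I"
      show "a j powr p \<le> r j powr p + \<eta> powr p"
        by (cases "r j \<le> \<eta>") (auto simp: a_def max_def)
    qed
    also have "\<dots> = (\<Sum>j\<in>I. r j powr p) + real m * \<eta> powr p" by (simp add: sum.distrib cardI)
    also have "\<dots> \<le> (\<Sum>j\<in>I. r j powr p) + real m * (\<sigma> / real m)" using etap m0 by (intro add_left_mono mult_left_mono) auto
    also have "\<dots> = 1" using m0 by (simp add: \<sigma>_def)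
    finally show ?thesis .
  qed
  define T where "T = (\<lambda>t. S(m := (\<lambda>x. S m x + t)))"
  define K where "K = (\<lambda>t. attractor I (T t))"
  have lipT: "(a j)-lipschitz_on UNIV (T t j)" if "j \<in> I" for t j
    unfolding T_def using lip_shift[where S=S and i=j and m=m and t=t and L="a j"] aI(5)[OF that] by blast
  have Kp: "K t \<noteq> {} \<and> compact (K t) \<and> K t = (\<Union>i\<in>I. T t i ` K t)" for t
    unfolding K_def
  proof (rule attractor_props[OF finI Ine])
    show "0 \<le> c" "c < 1" using c by auto
    fix i assume "i \<in> I"
    then show "c-lipschitz_on UNIV (T t i)" using lipT aI by (blast intro: lipschitz_on_le)
  qed
  define M where "M = Max ((\<lambda>i. norm (S i 0)) ` I)"
  have M: "norm (S i 0) \<le> M" if "i \<in> I" for i using finI that by (simp add: M_def)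
  have M0: "0 \<le> M" using M[OF kI] norm_ge_zero[of "S k 0"] by linarith
  define D where "D = (\<lambda>R::real. (M + R) / (1 - c))"
  have Kb: "norm y \<le> D R" if "norm t \<le> R" "y \<in> K t" for t y R
    unfolding D_def
  proof (rule attr_bound[where T="T t" and I=I and c=c and K="K t"])
    show "compact (K t)" "K t \<noteq> {}" "K t = (\<Union>i\<in>I. T t i ` K t)" using Kp by auto
    show "c < 1" by (rule c)
    show "y \<in> K t" by (rule that)
    fix i assume i: "i \<in> I"
    then show "c-lipschitz_on UNIV (T t i)" using lipT aI by (blast intro: lipschitz_on_le)
    show "norm (T t i 0) \<le> M + R"
    proof (cases "i = m")
      case True
      then have "T t i 0 = S m 0 + t" by (simp add: T_def)
      then show ?thesis using M[OF mI] norm_triangle_ineq[of "S m 0" t] that(1) by simp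
    next
      case False
      then have "T t i 0 = S i 0" by (simp add: T_def)
      have "norm (S i 0) \<le> M + R" using M[OF i] that(1) norm_ge_zero[of t] by linarith
      then show ?thesis unfolding \<open>T t i 0 = S i 0\<close> .
    qed
  qed
  define P where "P = (\<lambda>t. let St = (S(m := (\<lambda>x. S m x + t))) in
           St k ` attractor {1..m} St \<inter> St m ` attractor {1..m} St = {})"
  define bad where "bad = {t. \<not> P t}"
  have badchar: "\<exists>y\<in>K t. \<exists>z\<in>K t. S k y = S m z + t" if "t \<in> bad" for t
  proof -
    have np: "\<not> P t" using that by (simp add: bad_def)
    have "(T t) k ` K t \<inter> (T t) m ` K t \<noteq> {}" using np unfolding P_def Let_def T_def K_def I_def .
    moreover have "(T t) k = S k" "(T t) m = (\<lambda>x. S m x + t)" using km by (auto simp: T_def)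
    ultimately show ?thesis by auto
  qed
  have key: "negligible (bad \<inter> cball 0 R)" if R: "0 \<le> R" for R
  proof -
    define DD where "DD = D R"
    have DD0: "0 \<le> DD" using M0 R c by (simp add: DD_def D_def)
    define L where "L = (a k + a m) / (1 - c)"
    have L1: "L < 1" using akm c by (simp add: L_def pos_divide_less_eq)
    define \<kappa> where "\<kappa> = 1 - L"
    have ka: "0 < \<kappa>" using L1 by (simp add: \<kappa>_def)
    define nn where "nn = CARD('n)"
    define q where "q = real nn - 2 * p"
    have q: "0 < q" using p by (simp add: q_def nn_def)
    define V where "V = unit_ball_vol (real nn)"
    have V0: "0 \<le> V" by (simp add: V_def)
    define C where "C = (1 / (\<eta> powr p * \<eta> powr p)) * (V * (4 * DD / \<kappa>) ^ nn)"
    have C0: "0 \<le> C" using V0 DD0 ka by (simp add: C_def)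
    show ?thesis unfolding negligible_outer_le
    proof (intro allI impI)
      fix e :: real assume e: "0 < e"
      define y0 where "y0 = (e / (C + 1)) powr (1 / q)"
      have y0: "0 < y0" "y0 powr q = e / (C + 1)" using e C0 q by (simp_all add: y0_def powr_powr)
      define \<epsilon> where "\<epsilon> = min (1/2) y0"
      have eps: "0 < \<epsilon>" "\<epsilon> < 1" using y0 by (auto simp: \<epsilon>_def)
      have epsq: "\<epsilon> powr q \<le> e / (C + 1)"
        using powr_mono2[of q \<epsilon> y0] eps y0 q by (simp add: \<epsilon>_def)
      obtain N where N: "c ^ N < \<epsilon>" using real_arch_pow_inv[OF eps(1) c(2)] by blast
      define W where "W = moran a I \<epsilon> N"
      have finW: "finite W" using moran_finite[OF finI] by (simp add: W_def)
      define Pb where "Pb = (\<lambda>w w'. {t. norm t \<le> R \<and> (\<exists>y\<in>K t. \<exists>z\<in>K t. S k (wcomp (T t) w y) = S m (wcomp (T t) w' z) + t)})"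
      define ctr where "ctr = (\<lambda>w w'. SOME t. t \<in> Pb w w')"
      define rad where "rad = 4 * \<epsilon> * DD / \<kappa>"
      have rad0: "0 \<le> rad" using eps DD0 ka by (simp add: rad_def)
      define U where "U = (\<Union>ww\<in>W \<times> W. cball (ctr (fst ww) (snd ww)) rad)"
      have aIS: "\<And>i. i \<in> I \<Longrightarrow> (a i)-lipschitz_on UNIV (S i)" using aI by blast
      have aIc: "\<And>i. i \<in> I \<Longrightarrow> (a i)-lipschitz_on UNIV (S i) \<and> a i \<le> c" using aI by blast
      have Fb: "norm (S k (wcomp (S(m := (\<lambda>x. S m x + t))) w 0) - S m (wcomp (S(m := (\<lambda>x. S m x + t))) w' 0) - t) \<le> 2 * \<epsilon> * DD"
        if wW: "w \<in> W" "w' \<in> W" "t \<in> Pb w w'" for w w' t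
      proof -
        obtain y z where yz: "y \<in> K t" "z \<in> K t" "S k (wcomp (T t) w y) = S m (wcomp (T t) w' z) + t" "norm t \<le> R"
          using wW(3) by (auto simp: Pb_def)
        have ww: "set w \<subseteq> I" "set w' \<subseteq> I" "rho a w \<le> \<epsilon>" "rho a w' \<le> \<epsilon>" using wW(1,2) by (auto simp: W_def moran_def)
        have h: "S k (wcomp (S(m := (\<lambda>x. S m x + t))) w y) = S m (wcomp (S(m := (\<lambda>x. S m x + t))) w' z) + t"
          using yz(3) unfolding T_def .
        have "norm (S k (wcomp (S(m := (\<lambda>x. S m x + t))) w 0) - S m (wcomp (S(m := (\<lambda>x. S m x + t))) w' 0) - t) \<le> (rho a w + rho a w') * DD"
          by (rule F_bound[where I=I and a=a, OF aIS kI mI km aI(3)[OF kI] aI(3)[OF mI] ww(1,2) h])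
             (use Kb[OF yz(4) yz(1)] Kb[OF yz(4) yz(2)] in \<open>simp_all add: DD_def\<close>)
        also have "\<dots> \<le> (\<epsilon> + \<epsilon>) * DD" using ww DD0 by (intro mult_right_mono) auto
        finally show ?thesis by simp
      qed
      have cover: "bad \<inter> cball 0 R \<subseteq> U"
      proof
        fix t assume t: "t \<in> bad \<inter> cball 0 R"
        then have tR: "norm t \<le> R" by auto
        obtain y0 z0 where yz0: "y0 \<in> K t" "z0 \<in> K t" "S k y0 = S m z0 + t" using badchar t by blast
        have Kinv: "K t = (\<Union>i\<in>I. T t i ` K t)" using Kp by blast
        have aa: "\<And>i. i \<in> I \<Longrightarrow> 0 \<le> a i \<and> a i \<le> c" using aI by blast
        have Nl: "c ^ N \<le> \<epsilon>" using N by simp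
        obtain w y where w: "w \<in> W" "y \<in> K t" "y0 = wcomp (T t) w y"
          using moran_cover[where a=a and c=c, OF Kinv yz0(1) aa Nl eps(2)] unfolding W_def by blast
        obtain w' z where w': "w' \<in> W" "z \<in> K t" "z0 = wcomp (T t) w' z"
          using moran_cover[where a=a and c=c, OF Kinv yz0(2) aa Nl eps(2)] unfolding W_def by blast
        have tP: "t \<in> Pb w w'" unfolding Pb_def using tR w(2) w'(2) yz0(3) unfolding w(3) w'(3) by blast
        have cP: "ctr w w' \<in> Pb w w'" unfolding ctr_def by (rule someI) (rule tP)
        have ww: "set w \<subseteq> I" "set w' \<subseteq> I" using w(1) w'(1) by (auto simp: W_def moran_def)
        have "norm (t - ctr w w') * (1 - (a k + a m) / (1 - c)) \<le> 2 * (2 * \<epsilon> * DD)"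
          by (rule pair_close[where I=I and a=a, OF aIc c(2) kI mI km aI(3)[OF kI] aI(3)[OF mI] ww
                Fb[OF w(1) w'(1) tP] Fb[OF w(1) w'(1) cP]])
        then have "norm (t - ctr w w') * \<kappa> \<le> 4 * \<epsilon> * DD" by (simp add: \<kappa>_def L_def)
        then have "norm (t - ctr w w') \<le> rad" using ka by (simp add: rad_def pos_le_divide_eq)
        then have "t \<in> cball (ctr w w') rad" by (simp add: dist_norm norm_minus_commute)
        then show "t \<in> U" unfolding U_def using w(1) w'(1) by force
      qed
      have Umeas: "U \<in> lmeasurable" unfolding U_def by (intro fmeasurable.finite_UN) (auto simp: finW)
      have mc: "measure lebesgue (cball x rad) = V * rad ^ nn" for x :: "real^'n"
      proof -
        have "measure lebesgue (cball x rad) = measure lborel (cball x rad)"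
          by (rule measure_completion) simp
        also have "\<dots> = V * rad ^ nn" using content_cball[OF rad0, of x] by (simp add: V_def nn_def)
        finally show ?thesis .
      qed
      define cw where "cw = real (card W)"
      have cw0: "0 \<le> cw" by (simp add: cw_def)
      have Ubound: "measure lebesgue U \<le> e"
      proof -
        have "measure lebesgue U \<le> (\<Sum>ww\<in>W \<times> W. measure lebesgue (cball (ctr (fst ww) (snd ww)) rad))"
          unfolding U_def by (intro measure_UNION_le) (auto simp: finW)
        also have "\<dots> = (\<Sum>ww\<in>W \<times> W. V * rad ^ nn)" by (simp add: mc)
        also have "\<dots> = cw * cw * (V * rad ^ nn)" by (simp add: card_cartesian_product cw_def)
        also have "\<dots> \<le> e"
        proof -
          have mcard: "cw * (\<epsilon> * \<eta>) powr p \<le> 1" unfolding cw_def W_def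
            by (rule moran_card[OF finI _ eta(1) p(1) asum eps(1)]) (use aI in blast)
          have "0 \<le> cw * (\<epsilon> * \<eta>) powr p" using cw0 by simp
          then have sq: "(cw * (\<epsilon> * \<eta>) powr p) * (cw * (\<epsilon> * \<eta>) powr p) \<le> 1" using mcard by (rule mult_le_one[OF mcard])
          have eqX: "(cw * (\<epsilon> * \<eta>) powr p) * (cw * (\<epsilon> * \<eta>) powr p) = (cw * cw * (\<epsilon> powr p * \<epsilon> powr p)) * (\<eta> powr p * \<eta> powr p)"
            by (simp only: powr_mult mult_ac)
          have "(cw * cw * (\<epsilon> powr p * \<epsilon> powr p)) * (\<eta> powr p * \<eta> powr p) \<le> 1" using sq[unfolded eqX] .
          moreover have "0 < \<eta> powr p * \<eta> powr p" using eta by simp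
          ultimately have A: "cw * cw * (\<epsilon> powr p * \<epsilon> powr p) \<le> 1 / (\<eta> powr p * \<eta> powr p)"
            by (simp add: le_divide_eq)
          have "\<epsilon> ^ nn = \<epsilon> powr (real nn)" using eps by (simp add: powr_realpow)
          also have "real nn = p + p + q" by (simp add: q_def)
          also have "\<epsilon> powr (p + p + q) = (\<epsilon> powr p * \<epsilon> powr p) * \<epsilon> powr q" by (simp only: powr_add)
          finally have en: "\<epsilon> ^ nn = (\<epsilon> powr p * \<epsilon> powr p) * \<epsilon> powr q" .
          have "rad = \<epsilon> * (4 * DD / \<kappa>)" by (simp add: rad_def)
          then have "rad ^ nn = \<epsilon> ^ nn * (4 * DD / \<kappa>) ^ nn" by (simp only: power_mult_distrib)
          then have B: "cw * cw * (V * rad ^ nn) = (cw * cw * (\<epsilon> powr p * \<epsilon> powr p)) * (V * (4 * DD / \<kappa>) ^ nn * \<epsilon> powr q)"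
            unfolding en by (simp only: mult_ac)
          have Z: "0 \<le> V * (4 * DD / \<kappa>) ^ nn * \<epsilon> powr q" using V0 DD0 ka by simp
          have "cw * cw * (V * rad ^ nn) \<le> (1 / (\<eta> powr p * \<eta> powr p)) * (V * (4 * DD / \<kappa>) ^ nn * \<epsilon> powr q)"
            unfolding B using A Z by (rule mult_right_mono)
          also have "\<dots> = C * \<epsilon> powr q" by (simp add: C_def mult.assoc)
          also have "\<dots> \<le> C * (e / (C + 1))" using epsq C0 by (rule mult_left_mono)
          also have "\<dots> \<le> e" using C0 e by (simp add: field_simps)
          finally show ?thesis .
        qed
        finally show ?thesis .
      qed
      show "\<exists>T. bad \<inter> cball 0 R \<subseteq> T \<and> T \<in> lmeasurable \<and> measure lebesgue T \<le> e"
        using cover Umeas Ubound by blast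
    qed
  qed
  have "negligible bad"
  proof -
    have "bad = (\<Union>n::nat. bad \<inter> cball 0 (real n))"
    proof (intro equalityI subsetI)
      fix t assume "t \<in> bad"
      obtain n :: nat where "norm t \<le> real n" using real_arch_simple by blast
      then show "t \<in> (\<Union>n::nat. bad \<inter> cball 0 (real n))" using \<open>t \<in> bad\<close> by auto
    qed auto
    moreover have "negligible (\<Union>n::nat. bad \<inter> cball 0 (real n))"
      by (rule negligible_countable_Union) (auto intro: key)
    ultimately show ?thesis by simp
  qed
  then have "AE t in lebesgue. P t"
    unfolding eventually_ae_filter_negligible bad_def by blast
  then show ?thesis unfolding AE_completion_iff P_def .
qed


end
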